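(* As $n\to\infty$, $f_4(n)\le \frac{14}{15}(1+o(1))\binom{n}{2}$.
   Context: For $n\ge r\ge 1$, $K_n^{(r)}$ denotes the complete $r$-uniform hypergraph on $n$ vertices (all $r$-subsets of an $n$-set). A complete $r$-partite $r$-graph on a vertex set $V$ is given by pairwise disjoint nonempty sets $V_1,\dots,V_r\subseteq V$, and its edges are all $r$-sets containing exactly one vertex from each $V_i$. $f_r(n)$ is the minimum number of complete $r$-partite $r$-graphs (on the vertex set of $K_n^{(r)}$) whose edge sets partition the edge set of $K_n^{(r)}$. *)

theory Defs
  imports Complex_Main
begin

definition complete_hyp_edges :: "nat \<Rightarrow> nat \<Rightarrow> nat set set" where
  "complete_hyp_edges n r = {e. e \<subseteq> {..<n} \<and> card e = r}"

definition is_complete_partite :: "nat \<Rightarrow> nat \<Rightarrow> (nat \<Rightarrow> nat set) \<Rightarrow> bool" where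
  "is_complete_partite n r P \<longleftrightarrow>
     (\<forall>i<r. P i \<noteq> {} \<and> P i \<subseteq> {..<n}) \<and>
     (\<forall>i<r. \<forall>j<r. i \<noteq> j \<longrightarrow> P i \<inter> P j = {})"

definition partite_edges :: "nat \<Rightarrow> nat \<Rightarrow> (nat \<Rightarrow> nat set) \<Rightarrow> nat set set" where
  "partite_edges n r P = {e. e \<subseteq> {..<n} \<and> card e = r \<and> (\<forall>i<r. card (e \<inter> P i) = 1)}"

definition f :: "nat \<Rightarrow> nat \<Rightarrow> nat" where
  "f r n = (LEAST k. \<exists>G :: nat \<Rightarrow> nat \<Rightarrow> nat set.
      (\<forall>j<k. is_complete_partite n r (G j)) \<and>
      (\<forall>j<k. \<forall>j'<k. j \<noteq> j' \<longrightarrow> partite_edges n r (G j) \<inter> partite_edges n r (G j') = {}) \<and>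
      (\<Union>j<k. partite_edges n r (G j)) = complete_hyp_edges n r)"

end

theory Submission
  imports Defs
begin

definition grph :: "nat \<Rightarrow> (nat \<Rightarrow> nat) \<Rightarrow> nat \<Rightarrow> nat set" where
  "grph n \<rho> = (\<lambda>p. {v. v < n \<and> \<rho> v = p})"

definition okl :: "nat \<Rightarrow> (nat \<Rightarrow> nat) \<Rightarrow> bool" where
  "okl n \<rho> \<longleftrightarrow> (\<forall>p<4. \<exists>v<n. \<rho> v = p)"

lemma okl_partite: "okl n \<rho> \<Longrightarrow> is_complete_partite n 4 (grph n \<rho>)"
  unfolding okl_def is_complete_partite_def grph_def by fastforce

lemma pe_grph:
  "e \<in> partite_edges n 4 (grph n \<rho>) \<longleftrightarrow> e \<in> complete_hyp_edges n 4 \<and> \<rho> ` e = {0,1,2,3}"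
proof
  assume A: "e \<in> partite_edges n 4 (grph n \<rho>)"
  hence sub: "e \<subseteq> {..<n}" and c4: "card e = 4" and h: "\<forall>p<4. card (e \<inter> grph n \<rho> p) = 1"
    unfolding partite_edges_def by auto
  have fin: "finite e" using sub finite_subset by blast
  have s1: "{0,1,2,3} \<subseteq> \<rho> ` e"
  proof
    fix p assume "p \<in> {0,1,2,3::nat}" hence "p<4" by auto
    hence "card (e \<inter> grph n \<rho> p) = 1" using h by auto
    then obtain v where "e \<inter> grph n \<rho> p = {v}" using card_1_singletonE by blast
    hence "v \<in> e" "\<rho> v = p" unfolding grph_def by auto
    thus "p \<in> \<rho> ` e" by auto
  qed
  moreover have "\<rho> ` e \<subseteq> {0,1,2,3}"
  proof
    fix x assume x: "x \<in> \<rho> ` e"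
    show "x \<in> {0,1,2,3}"
    proof (rule ccontr)
      assume "x \<notin> {0,1,2,3}"
      hence c5: "card (insert x {0,1,2,3::nat}) = 5" by simp
      have "insert x {0,1,2,3} \<subseteq> \<rho> ` e" using x s1 by auto
      hence "card (insert x {0,1,2,3}) \<le> card (\<rho> ` e)" using fin by (intro card_mono) auto
      moreover have "card (\<rho> ` e) \<le> 4" using card_image_le[OF fin, of \<rho>] c4 by simp
      ultimately show False using c5 by simp
    qed
  qed
  ultimately show "e \<in> complete_hyp_edges n 4 \<and> \<rho> ` e = {0,1,2,3}"
    using sub c4 unfolding complete_hyp_edges_def by auto
next
  assume B: "e \<in> complete_hyp_edges n 4 \<and> \<rho> ` e = {0,1,2,3}"
  hence sub: "e \<subseteq> {..<n}" and c4: "card e = 4" and im: "\<rho> ` e = {0,1,2,3}"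
    unfolding complete_hyp_edges_def by auto
  have fin: "finite e" using sub finite_subset by blast
  have inj: "inj_on \<rho> e" using im c4 fin by (intro eq_card_imp_inj_on) simp_all
  have "\<forall>p<4. card (e \<inter> grph n \<rho> p) = 1"
  proof (intro allI impI)
    fix p :: nat assume "p<4"
    hence "p \<in> \<rho> ` e" using im by auto
    then obtain v where v: "v \<in> e" "\<rho> v = p" by auto
    have "e \<inter> grph n \<rho> p = {v}"
      using v inj sub unfolding grph_def inj_on_def by auto
    thus "card (e \<inter> grph n \<rho> p) = 1" by simp
  qed
  thus "e \<in> partite_edges n 4 (grph n \<rho>)" using sub c4 unfolding partite_edges_def by auto
qed

definition covc :: "(nat \<Rightarrow> nat) list \<Rightarrow> nat set \<Rightarrow> nat" where
  "covc L e = length (filter (\<lambda>\<rho>. \<rho> ` e = {0,1,2,3}) L)"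

lemma covc_append[simp]: "covc (xs @ ys) e = covc xs e + covc ys e"
  unfolding covc_def by simp

lemma covc_concat: "covc (concat xss) e = sum_list (map (\<lambda>xs. covc xs e) xss)"
  unfolding covc_def by (induction xss) auto

lemma hit_okl:
  assumes "e \<subseteq> {..<n}" "\<rho> ` e = {0,1,2,3}" shows "okl n \<rho>"
  unfolding okl_def
proof (intro allI impI)
  fix p :: nat assume "p<4"
  hence "p \<in> {0,1,2,3}" by auto
  hence "p \<in> \<rho> ` e" using assms(2) by simp
  then obtain v where "v\<in>e" "\<rho> v = p" by auto
  thus "\<exists>v<n. \<rho> v = p" using assms(1) by auto
qed

lemma f_le:
  assumes cov: "\<forall>e \<in> complete_hyp_edges n 4. covc L e = 1"
  shows "f 4 n \<le> length L"
proof -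
  define L' where "L' = filter (okl n) L"
  define G where "G = (\<lambda>j. grph n (L' ! j))"
  have cov': "covc L' e = 1" if e: "e \<in> complete_hyp_edges n 4" for e
  proof -
    have sub: "e \<subseteq> {..<n}" using e unfolding complete_hyp_edges_def by auto
    have "filter (\<lambda>\<rho>. \<rho> ` e = {0,1,2,3}) L' = filter (\<lambda>\<rho>. \<rho> ` e = {0,1,2,3}) L"
      unfolding L'_def filter_filter using hit_okl[OF sub] by (metis (lifting))
    thus ?thesis using cov e unfolding covc_def by simp
  qed
  have P1: "\<forall>j<length L'. is_complete_partite n 4 (G j)"
    unfolding G_def L'_def by (auto intro!: okl_partite dest: nth_mem)
  have P2: "\<forall>j<length L'. \<forall>j'<length L'. j \<noteq> j' \<longrightarrow> partite_edges n 4 (G j) \<inter> partite_edges n 4 (G j') = {}"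
  proof (intro allI impI)
    fix j j' assume j: "j < length L'" and j': "j' < length L'" and ne: "j \<noteq> j'"
    show "partite_edges n 4 (G j) \<inter> partite_edges n 4 (G j') = {}"
    proof (rule ccontr)
      assume "partite_edges n 4 (G j) \<inter> partite_edges n 4 (G j') \<noteq> {}"
      then obtain e where e1: "e \<in> partite_edges n 4 (G j)" and e2: "e \<in> partite_edges n 4 (G j')" by blast
      hence ce: "e \<in> complete_hyp_edges n 4" and h1: "(L'!j) ` e = {0,1,2,3}" and h2: "(L'!j') ` e = {0,1,2,3}"
        unfolding G_def pe_grph by auto
      have "{j,j'} \<subseteq> {i. i < length L' \<and> (L'!i) ` e = {0,1,2,3}}" using j j' h1 h2 by auto
      hence "card {j,j'} \<le> card {i. i < length L' \<and> (L'!i) ` e = {0,1,2,3}}"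
        by (intro card_mono) auto
      hence "2 \<le> covc L' e" unfolding covc_def length_filter_conv_card using ne by simp
      thus False using cov'[OF ce] by simp
    qed
  qed
  have P3: "(\<Union>j<length L'. partite_edges n 4 (G j)) = complete_hyp_edges n 4"
  proof
    show "(\<Union>j<length L'. partite_edges n 4 (G j)) \<subseteq> complete_hyp_edges n 4"
      unfolding G_def by (auto simp: pe_grph)
    show "complete_hyp_edges n 4 \<subseteq> (\<Union>j<length L'. partite_edges n 4 (G j))"
    proof
      fix e assume ce: "e \<in> complete_hyp_edges n 4"
      have "card {i. i < length L' \<and> (L'!i) ` e = {0,1,2,3}} = 1"
        using cov'[OF ce] unfolding covc_def length_filter_conv_card .
      hence "card {i. i < length L' \<and> (L'!i) ` e = {0,1,2,3}} > 0" by simp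
      hence "{i. i < length L' \<and> (L'!i) ` e = {0,1,2,3}} \<noteq> {}" using card_gt_0_iff by blast
      then obtain i where i: "i < length L'" "(L'!i) ` e = {0,1,2,3}" by blast
      hence "e \<in> partite_edges n 4 (G i)" unfolding G_def using ce pe_grph by blast
      thus "e \<in> (\<Union>j<length L'. partite_edges n 4 (G j))" using i by blast
    qed
  qed
  have "f 4 n \<le> length L'"
  proof -
    have ex: "\<exists>G :: nat \<Rightarrow> nat \<Rightarrow> nat set.
      (\<forall>j<length L'. is_complete_partite n 4 (G j)) \<and>
      (\<forall>j<length L'. \<forall>j'<length L'. j \<noteq> j' \<longrightarrow> partite_edges n 4 (G j) \<inter> partite_edges n 4 (G j') = {}) \<and>
      (\<Union>j<length L'. partite_edges n 4 (G j)) = complete_hyp_edges n 4"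
      using P1 P2 P3 by blast
    show ?thesis unfolding f_def by (rule Least_le) (rule ex)
  qed
  also have "\<dots> \<le> length L" unfolding L'_def by simp
  finally show ?thesis .
qed

definition PT :: "nat list list" where
"PT = [
[4, 4, 4, 4, 4, 0, 1, 4, 4, 4, 4, 4, 2, 3, 2, 3, 4, 4, 4, 4],
[4, 4, 4, 4, 0, 4, 4, 1, 4, 4, 4, 4, 2, 3, 2, 3, 4, 4, 4, 4],
[4, 4, 4, 4, 0, 1, 1, 0, 4, 4, 4, 4, 2, 3, 3, 2, 4, 4, 4, 4],
[4, 4, 4, 4, 0, 1, 1, 2, 4, 4, 4, 4, 0, 1, 4, 3, 4, 4, 4, 4],
[4, 4, 4, 4, 0, 1, 1, 2, 4, 4, 4, 4, 3, 4, 1, 2, 4, 4, 4, 4],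
[4, 4, 4, 4, 0, 1, 2, 0, 4, 4, 4, 4, 4, 3, 2, 0, 4, 4, 4, 4],
[4, 4, 4, 4, 0, 1, 2, 0, 4, 4, 4, 4, 0, 1, 3, 4, 4, 4, 4, 4],
[4, 4, 4, 4, 0, 1, 1, 1, 4, 4, 4, 4, 2, 2, 2, 2, 3, 3, 3, 3],
[4, 4, 4, 4, 4, 0, 1, 1, 4, 4, 4, 4, 2, 2, 2, 2, 3, 3, 3, 3],
[4, 4, 4, 4, 4, 4, 0, 1, 4, 4, 4, 4, 2, 2, 2, 2, 3, 3, 3, 3],
[4, 4, 4, 4, 0, 0, 0, 0, 3, 3, 3, 3, 1, 2, 2, 2, 3, 3, 3, 3],
[4, 4, 4, 4, 0, 0, 0, 0, 3, 3, 3, 3, 4, 1, 2, 2, 3, 3, 3, 3],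
[4, 4, 4, 4, 0, 0, 0, 0, 3, 3, 3, 3, 4, 4, 1, 2, 3, 3, 3, 3]]"

definition BT :: "nat list list" where
"BT = [
[4, 4, 4, 4, 0, 1, 2, 3, 4, 4, 4, 4],
[3, 4, 3, 3, 4, 0, 1, 2, 4, 4, 4, 4],
[4, 4, 4, 4, 4, 0, 1, 2, 3, 4, 4, 3],
[4, 3, 3, 3, 0, 4, 1, 2, 4, 4, 4, 4],
[4, 4, 4, 4, 0, 4, 1, 2, 4, 3, 3, 4],
[3, 3, 3, 4, 0, 1, 4, 2, 4, 4, 4, 4],
[4, 4, 4, 4, 0, 1, 4, 2, 4, 3, 3, 4],
[3, 3, 4, 3, 0, 1, 2, 4, 4, 4, 4, 4],
[4, 4, 4, 4, 0, 1, 2, 4, 3, 4, 4, 3]]"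

definition hit4 :: "nat \<Rightarrow> nat \<Rightarrow> nat \<Rightarrow> nat \<Rightarrow> bool" where
"hit4 x y z w \<longleftrightarrow> distinct [x,y,z,w] \<and> x < 4 \<and> y < 4 \<and> z < 4 \<and> w < 4"

definition CT :: "nat list list \<Rightarrow> nat \<Rightarrow> nat \<Rightarrow> nat \<Rightarrow> nat \<Rightarrow> nat \<Rightarrow> nat \<Rightarrow> nat \<Rightarrow> nat \<Rightarrow> nat" where
"CT L ra pa rb pb rc pc rd pd = length (filter (\<lambda>tb. hit4 (tb!(4*ra+pa)) (tb!(4*rb+pb)) (tb!(4*rc+pc)) (tb!(4*rd+pd))) L)"

lemma pat1_all: "list_all (\<lambda>pa. list_all (\<lambda>pb. list_all (\<lambda>pc. list_all (\<lambda>pd.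
  CT BT 1 pa 1 pb 1 pc 1 pd = 1) [Suc pc..<4]) [Suc pb..<4]) [Suc pa..<4]) [0..<4]"
  by code_simp

lemma pat2_all: "list_all (\<lambda>pa. list_all (\<lambda>pb. list_all (\<lambda>pc. list_all (\<lambda>pd.
  CT PT 1 pa 1 pb 1 pc 3 pd + (CT BT 1 pa 1 pb 1 pc 2 pd + CT BT 0 pa 0 pb 0 pc 1 pd) = 1) [0..<4]) [Suc pb..<4]) [Suc pa..<4]) [0..<4]"
  by code_simp

lemma pat3_all: "list_all (\<lambda>pa. list_all (\<lambda>pb. list_all (\<lambda>pc. list_all (\<lambda>pd.
  CT PT 1 pa 3 pb 3 pc 3 pd + (CT BT 1 pa 2 pb 2 pc 2 pd + CT BT 0 pa 1 pb 1 pc 1 pd) = 1) [Suc pc..<4]) [Suc pb..<4]) [0..<4]) [0..<4]"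
  by code_simp

lemma pat4_all: "list_all (\<lambda>pa. list_all (\<lambda>pb. list_all (\<lambda>pc. list_all (\<lambda>pd.
  CT PT 1 pa 1 pb 3 pc 3 pd + (CT BT 1 pa 1 pb 2 pc 2 pd + CT BT 0 pa 0 pb 1 pc 1 pd) = 1) [Suc pc..<4]) [0..<4]) [Suc pa..<4]) [0..<4]"
  by code_simp

lemma pat5_all: "list_all (\<lambda>pa. list_all (\<lambda>pb. list_all (\<lambda>pc. list_all (\<lambda>pd.
  CT PT 1 pa 1 pb 3 pc 4 pd + CT PT 1 pa 1 pb 2 pc 3 pd + CT PT 0 pa 0 pb 1 pc 3 pd + (CT BT 1 pa 1 pb 2 pc 2 pd + CT BT 0 pa 0 pb 1 pc 2 pd + CT BT 0 pa 0 pb 0 pc 1 pd) = 1) [0..<4]) [0..<4]) [Suc pa..<4]) [0..<4]"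
  by code_simp

lemma pat6_all: "list_all (\<lambda>pa. list_all (\<lambda>pb. list_all (\<lambda>pc. list_all (\<lambda>pd.
  CT PT 1 pa 3 pb 3 pc 4 pd + CT PT 1 pa 2 pb 2 pc 3 pd + CT PT 0 pa 1 pb 1 pc 3 pd + (CT BT 1 pa 2 pb 2 pc 2 pd + CT BT 0 pa 1 pb 1 pc 2 pd + CT BT 0 pa 0 pb 0 pc 1 pd) = 1) [0..<4]) [Suc pb..<4]) [0..<4]) [0..<4]"
  by code_simp

lemma pat7_all: "list_all (\<lambda>pa. list_all (\<lambda>pb. list_all (\<lambda>pc. list_all (\<lambda>pd.
  CT PT 1 pa 3 pb 4 pc 4 pd + CT PT 1 pa 2 pb 3 pc 3 pd + CT PT 0 pa 1 pb 3 pc 3 pd + (CT BT 1 pa 2 pb 2 pc 2 pd + CT BT 0 pa 1 pb 2 pc 2 pd + CT BT 0 pa 0 pb 1 pc 1 pd) = 1) [Suc pc..<4]) [0..<4]) [0..<4]) [0..<4]"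
  by code_simp

lemma lt4_iff: "(x::nat) < 4 \<longleftrightarrow> x \<in> {0,1,2,3}" by auto

lemma set4_hit4: "({x,y,z,w} = {0,1,2,3::nat}) \<longleftrightarrow> hit4 x y z w"
proof
  assume h: "{x,y,z,w} = {0,1,2,3::nat}"
  have c: "card (set [x,y,z,w]) = 4" unfolding list.set h by simp
  have c': "card (set [x,y,z,w]) = length [x,y,z,w]" using c by simp
  have d: "distinct [x,y,z,w]" using card_distinct[OF c'] .
  have "x \<in> {x,y,z,w}" "y \<in> {x,y,z,w}" "z \<in> {x,y,z,w}" "w \<in> {x,y,z,w}" by simp_all
  hence "x \<in> {0,1,2,3::nat}" "y \<in> {0,1,2,3::nat}" "z \<in> {0,1,2,3::nat}" "w \<in> {0,1,2,3::nat}"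
    by (simp_all only: h)
  hence "x < 4" "y < 4" "z < 4" "w < 4" by (simp_all only: lt4_iff)
  thus "hit4 x y z w" unfolding hit4_def using d by simp
next
  assume h: "hit4 x y z w"
  have "x \<in> {0,1,2,3::nat}" "y \<in> {0,1,2,3::nat}" "z \<in> {0,1,2,3::nat}" "w \<in> {0,1,2,3::nat}"
    using h unfolding hit4_def lt4_iff by simp_all
  hence sub: "{x,y,z,w} \<subseteq> {0,1,2,3::nat}" by (simp only: insert_subset) simp
  have d: "distinct [x,y,z,w]" using h unfolding hit4_def by simp
  have "card (set [x,y,z,w]) = 4" using distinct_card[OF d] by simp
  hence "card {x,y,z,w} = card {0,1,2,3::nat}" by simp
  thus "{x,y,z,w} = {0,1,2,3::nat}" using sub by (intro card_subset_eq) auto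
qed
lemma set4_hit4': "({x,y,z,w} = {0,Suc 0,2,3::nat}) \<longleftrightarrow> hit4 x y z w"
  using set4_hit4 by simp

lemma hit4_mem: "hit4 x y z w \<Longrightarrow> p < 4 \<Longrightarrow> p = x \<or> p = y \<or> p = z \<or> p = w"
proof -
  assume h: "hit4 x y z w" and p: "p < 4"
  have e: "{x,y,z,w} = {0,1,2,3::nat}" by (subst set4_hit4) (rule h)
  have "p \<in> {0,1,2,3::nat}" using p by (simp only: lt4_iff)
  hence "p \<in> {x,y,z,w}" by (simp only: e)
  thus ?thesis by simp
qed

definition rel5 :: "nat \<Rightarrow> nat \<Rightarrow> nat \<Rightarrow> nat" where
  "rel5 b i j = (if b < i then 0 else if b = i then 1 else if b < j then 2 else if b = j then 3 else 4)"

definition rel3 :: "nat \<Rightarrow> nat \<Rightarrow> nat" where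
  "rel3 b i = (if b < i then 0 else if b = i then 1 else 2)"

definition pairLab :: "nat list \<Rightarrow> nat \<Rightarrow> nat \<Rightarrow> nat \<Rightarrow> nat" where
  "pairLab tb i j v = tb ! (4 * rel5 (v div 4) i j + v mod 4)"

definition blkLab :: "nat list \<Rightarrow> nat \<Rightarrow> nat \<Rightarrow> nat" where
  "blkLab tb i v = tb ! (4 * rel3 (v div 4) i + v mod 4)"

fun prs :: "nat \<Rightarrow> (nat \<times> nat) list" where
  "prs 0 = []"
| "prs (Suc t) = prs t @ map (\<lambda>i. (i,t)) [0..<t]"

lemma set_prs: "set (prs t) = {x. fst x < snd x \<and> snd x < t}"
proof (induction t)
  case (Suc t)
  show ?case
  proof (rule set_eqI)
    fix x :: "nat \<times> nat"
    obtain i j where x: "x = (i,j)" by force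
    have "x \<in> set (prs (Suc t)) \<longleftrightarrow> (i < j \<and> j < t) \<or> (j = t \<and> i < t)"
      using Suc.IH x by auto
    also have "\<dots> \<longleftrightarrow> i < j \<and> j < Suc t" by auto
    finally show "x \<in> set (prs (Suc t)) \<longleftrightarrow> x \<in> {x. fst x < snd x \<and> snd x < Suc t}" using x by simp
  qed
qed simp

lemma distinct_prs: "distinct (prs t)"
proof (induction t)
  case (Suc t)
  have "set (prs t) \<inter> set (map (\<lambda>i. (i,t)) [0..<t]) = {}" using set_prs[of t] by force
  moreover have "distinct (map (\<lambda>i. (i,t)) [0..<t])" by (simp add: distinct_map inj_on_def)
  ultimately show ?case using Suc by simp
qed simp

lemma length_prs: "2 * length (prs t) + t = t * t"
proof (induction t)
  case (Suc t)
  have "2 * length (prs (Suc t)) + Suc t = (2 * length (prs t) + t) + 2 * t + 1" by simp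
  also have "\<dots> = t * t + 2 * t + 1" using Suc.IH by simp
  also have "\<dots> = Suc t * Suc t" by simp
  finally show ?case .
qed simp

definition pfam :: "nat \<times> nat \<Rightarrow> (nat \<Rightarrow> nat) list" where
  "pfam x = map (\<lambda>tb. pairLab tb (fst x) (snd x)) PT"

definition bfam :: "nat \<Rightarrow> (nat \<Rightarrow> nat) list" where
  "bfam i = map (\<lambda>tb. blkLab tb i) BT"

definition stuff :: "nat \<Rightarrow> (nat \<Rightarrow> nat) list" where
  "stuff t = concat (map pfam (prs t)) @ concat (map bfam [0..<t])"

lemma length_stuff: "length (stuff t) = 13 * length (prs t) + 9 * t"
proof -
  have l1: "length (pfam x) = 13" for x by (simp add: pfam_def PT_def)
  have l2: "length (bfam x) = 9" for x by (simp add: bfam_def BT_def)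
  have "length (concat (map pfam (prs t))) = 13 * length (prs t)"
    by (simp add: length_concat comp_def l1 sum_list_triv)
  moreover have "length (concat (map bfam [0..<t])) = 9 * t"
    by (simp add: length_concat comp_def l2 sum_list_triv)
  ultimately show ?thesis unfolding stuff_def by simp
qed

lemma covc_stuff:
  "covc (stuff t) e = sum_list (map (\<lambda>x. covc (pfam x) e) (prs t)) + sum_list (map (\<lambda>i. covc (bfam i) e) [0..<t])"
  unfolding stuff_def by (simp add: covc_concat comp_def)

lemma covc_pfam: "covc (pfam x) {a,b,c,d} =
  CT PT (rel5 (a div 4) (fst x) (snd x)) (a mod 4) (rel5 (b div 4) (fst x) (snd x)) (b mod 4)
        (rel5 (c div 4) (fst x) (snd x)) (c mod 4) (rel5 (d div 4) (fst x) (snd x)) (d mod 4)"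
  unfolding covc_def pfam_def CT_def by (simp add: filter_map comp_def pairLab_def set4_hit4')

lemma covc_bfam: "covc (bfam i) {a,b,c,d} =
  CT BT (rel3 (a div 4) i) (a mod 4) (rel3 (b div 4) i) (b mod 4) (rel3 (c div 4) i) (c mod 4) (rel3 (d div 4) i) (d mod 4)"
  unfolding covc_def bfam_def CT_def by (simp add: filter_map comp_def blkLab_def set4_hit4')

lemma PT_I: "list_all (\<lambda>tb. list_ex (\<lambda>p. list_all (\<lambda>k. tb!k \<noteq> p \<or> (4*1 \<le> k \<and> k < 4*1+4)) [0..<20]) [0..<4]) PT"
  by code_simp
lemma PT_J: "list_all (\<lambda>tb. list_ex (\<lambda>p. list_all (\<lambda>k. tb!k \<noteq> p \<or> (4*3 \<le> k \<and> k < 4*3+4)) [0..<20]) [0..<4]) PT"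
  by code_simp
lemma BT_I: "list_all (\<lambda>tb. list_ex (\<lambda>p. list_all (\<lambda>k. tb!k \<noteq> p \<or> (4*1 \<le> k \<and> k < 4*1+4)) [0..<12]) [0..<4]) BT"
  by code_simp
lemma PT_L: "list_all (\<lambda>tb. list_all (\<lambda>r. list_all (\<lambda>r'. list_all (\<lambda>q. list_all (\<lambda>q'.
   tb!(4*r+q) = 4 \<or> tb!(4*r'+q') = 4 \<or> tb!(4*r+q) = tb!(4*r'+q')) [0..<4]) [0..<4]) [0,2,4]) [0,2,4]) PT"
  by code_simp
lemma BT_L: "list_all (\<lambda>tb. list_all (\<lambda>r. list_all (\<lambda>r'. list_all (\<lambda>q. list_all (\<lambda>q'.
   tb!(4*r+q) = 4 \<or> tb!(4*r'+q') = 4 \<or> tb!(4*r+q) = tb!(4*r'+q')) [0..<4]) [0..<4]) [0,2]) [0,2]) BT"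
  by code_simp

lemma idx_not: "(r::nat) \<noteq> s \<Longrightarrow> q < 4 \<Longrightarrow> \<not> (4*s \<le> 4*r+q \<and> 4*r+q < 4*s+4)"
  by presburger

lemma CT_zero_gen:
  assumes H: "list_all (\<lambda>tb. list_ex (\<lambda>p. list_all (\<lambda>k. tb!k \<noteq> p \<or> (4*s \<le> k \<and> k < 4*s+4)) [0..<M]) [0..<4]) L"
    and r: "r1 \<noteq> s" "r2 \<noteq> s" "r3 \<noteq> s" "r4 \<noteq> s"
    and m: "4*r1+q1 < M" "4*r2+q2 < M" "4*r3+q3 < M" "4*r4+q4 < M"
    and q: "q1 < 4" "q2 < 4" "q3 < 4" "q4 < 4"
  shows "CT L r1 q1 r2 q2 r3 q3 r4 q4 = 0"
proof -
  have "\<forall>tb\<in>set L. \<not> hit4 (tb!(4*r1+q1)) (tb!(4*r2+q2)) (tb!(4*r3+q3)) (tb!(4*r4+q4))"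
  proof
    fix tb assume tb: "tb \<in> set L"
    from H tb obtain p where p: "p < 4" and pk: "\<forall>k<M. tb!k \<noteq> p \<or> (4*s \<le> k \<and> k < 4*s+4)"
      unfolding list_all_iff list_ex_iff by auto
    have n1: "tb!(4*r1+q1) \<noteq> p" using pk m(1) idx_not[OF r(1) q(1)] by blast
    have n2: "tb!(4*r2+q2) \<noteq> p" using pk m(2) idx_not[OF r(2) q(2)] by blast
    have n3: "tb!(4*r3+q3) \<noteq> p" using pk m(3) idx_not[OF r(3) q(3)] by blast
    have n4: "tb!(4*r4+q4) \<noteq> p" using pk m(4) idx_not[OF r(4) q(4)] by blast
    show "\<not> hit4 (tb!(4*r1+q1)) (tb!(4*r2+q2)) (tb!(4*r3+q3)) (tb!(4*r4+q4))"
      using hit4_mem[OF _ p] n1 n2 n3 n4 by metis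
  qed
  thus ?thesis unfolding CT_def by (simp add: filter_empty_conv)
qed

lemma CT_zero_lift:
  assumes H: "list_all (\<lambda>tb. list_all (\<lambda>r. list_all (\<lambda>r'. list_all (\<lambda>q. list_all (\<lambda>q'.
   tb!(4*r+q) = 4 \<or> tb!(4*r'+q') = 4 \<or> tb!(4*r+q) = tb!(4*r'+q')) [0..<4]) [0..<4]) R) R) L"
    and q: "q1 < 4" "q2 < 4" "q3 < 4" "q4 < 4"
    and two: "(r1 \<in> set R \<and> r2 \<in> set R) \<or> (r1 \<in> set R \<and> r3 \<in> set R) \<or> (r1 \<in> set R \<and> r4 \<in> set R) \<or>
              (r2 \<in> set R \<and> r3 \<in> set R) \<or> (r2 \<in> set R \<and> r4 \<in> set R) \<or> (r3 \<in> set R \<and> r4 \<in> set R)"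
  shows "CT L r1 q1 r2 q2 r3 q3 r4 q4 = 0"
proof -
  have "\<forall>tb\<in>set L. \<not> hit4 (tb!(4*r1+q1)) (tb!(4*r2+q2)) (tb!(4*r3+q3)) (tb!(4*r4+q4))"
  proof
    fix tb assume tb: "tb \<in> set L"
    have P: "tb!(4*r+q) = 4 \<or> tb!(4*r'+q') = 4 \<or> tb!(4*r+q) = tb!(4*r'+q')"
      if "r \<in> set R" "r' \<in> set R" "q < 4" "q' < 4" for r r' q q'
    proof -
      have "q \<in> set [0..<4]" "q' \<in> set [0..<4]" using that by auto
      thus ?thesis using H tb that(1,2) unfolding list_all_iff by blast
    qed
    show "\<not> hit4 (tb!(4*r1+q1)) (tb!(4*r2+q2)) (tb!(4*r3+q3)) (tb!(4*r4+q4))"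
      using two
    proof (elim disjE conjE)
      assume "r1 \<in> set R" "r2 \<in> set R" thus ?thesis using P[of r1 r2 q1 q2] q unfolding hit4_def by auto
    next
      assume "r1 \<in> set R" "r3 \<in> set R" thus ?thesis using P[of r1 r3 q1 q3] q unfolding hit4_def by auto
    next
      assume "r1 \<in> set R" "r4 \<in> set R" thus ?thesis using P[of r1 r4 q1 q4] q unfolding hit4_def by auto
    next
      assume "r2 \<in> set R" "r3 \<in> set R" thus ?thesis using P[of r2 r3 q2 q3] q unfolding hit4_def by auto
    next
      assume "r2 \<in> set R" "r4 \<in> set R" thus ?thesis using P[of r2 r4 q2 q4] q unfolding hit4_def by auto
    next
      assume "r3 \<in> set R" "r4 \<in> set R" thus ?thesis using P[of r3 r4 q3 q4] q unfolding hit4_def by auto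
    qed
  qed
  thus ?thesis unfolding CT_def by (simp add: filter_empty_conv)
qed

lemma pairset_eq:
  fixes Bl :: "nat set" and S :: "(nat \<times> nat) set"
  assumes "\<And>i j. (i < j \<and> i \<in> Bl \<and> j \<in> Bl) \<longleftrightarrow> (i,j) \<in> S"
  shows "{x. fst x < snd x \<and> fst x \<in> Bl \<and> snd x \<in> Bl} = S"
proof (rule set_eqI)
  fix x :: "nat \<times> nat"
  obtain i j where x: "x = (i,j)" by force
  show "x \<in> {x. fst x < snd x \<and> fst x \<in> Bl \<and> snd x \<in> Bl} \<longleftrightarrow> x \<in> S"
    using assms[of i j] x by simp
qed

lemma samediv: "(x::nat) < y \<Longrightarrow> x div 4 = y div 4 \<Longrightarrow> x mod 4 < y mod 4"
proof -
  assume "x < y" "x div 4 = y div 4"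
  moreover have "x = 4 * (x div 4) + x mod 4" "y = 4 * (y div 4) + y mod 4" by simp_all
  ultimately show ?thesis by linarith
qed

lemma rel5_le: "rel5 b i j \<le> 4" unfolding rel5_def by auto
lemma rel5_1: "rel5 b i j = 1 \<longleftrightarrow> b = i" unfolding rel5_def by auto
lemma rel5_3: "i < j \<Longrightarrow> rel5 b i j = 3 \<longleftrightarrow> b = j" unfolding rel5_def by auto
lemma rel5_1': "rel5 b i j = Suc 0 \<longleftrightarrow> b = i" unfolding rel5_def by auto
lemma rel3_1': "rel3 b i = Suc 0 \<longleftrightarrow> b = i" unfolding rel3_def by auto
lemma rel3_le: "rel3 b i \<le> 2" unfolding rel3_def by auto
lemma rel3_1: "rel3 b i = 1 \<longleftrightarrow> b = i" unfolding rel3_def by auto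
lemma idx20: "q < 4 \<Longrightarrow> 4 * rel5 b i j + q < 20" using rel5_le[of b i j] by linarith
lemma idx12: "q < 4 \<Longrightarrow> 4 * rel3 b i + q < 12" using rel3_le[of b i] by linarith

lemma inj4: "distinct [a,b,c,d] \<Longrightarrow> inj_on g {a,b,c,d} \<longleftrightarrow> distinct [g a, g b, g c, g d]"
  by (simp add: inj_on_insert) blast
lemma pat1: "pa < pb \<Longrightarrow> pb < pc \<Longrightarrow> pc < pd \<Longrightarrow> pa < 4 \<Longrightarrow> pb < 4 \<Longrightarrow> pc < 4 \<Longrightarrow> pd < 4 \<Longrightarrow> CT BT 1 pa 1 pb 1 pc 1 pd = 1"
proof -
  assume "pa < pb" "pb < pc" "pc < pd" "pa < 4" "pb < 4" "pc < 4" "pd < 4"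
  hence m: "pa \<in> set [0..<4]" "pb \<in> set [Suc pa..<4]" "pc \<in> set [Suc pb..<4]" "pd \<in> set [Suc pc..<4]" by auto
  show ?thesis using pat1_all m unfolding list_all_iff by blast
qed
lemma pat2: "pa < pb \<Longrightarrow> pb < pc \<Longrightarrow> pa < 4 \<Longrightarrow> pb < 4 \<Longrightarrow> pc < 4 \<Longrightarrow> pd < 4 \<Longrightarrow> CT PT 1 pa 1 pb 1 pc 3 pd + (CT BT 1 pa 1 pb 1 pc 2 pd + CT BT 0 pa 0 pb 0 pc 1 pd) = 1"
proof -
  assume "pa < pb" "pb < pc" "pa < 4" "pb < 4" "pc < 4" "pd < 4"
  hence m: "pa \<in> set [0..<4]" "pb \<in> set [Suc pa..<4]" "pc \<in> set [Suc pb..<4]" "pd \<in> set [0..<4]" by auto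
  show ?thesis using pat2_all m unfolding list_all_iff by blast
qed
lemma pat3: "pb < pc \<Longrightarrow> pc < pd \<Longrightarrow> pa < 4 \<Longrightarrow> pb < 4 \<Longrightarrow> pc < 4 \<Longrightarrow> pd < 4 \<Longrightarrow> CT PT 1 pa 3 pb 3 pc 3 pd + (CT BT 1 pa 2 pb 2 pc 2 pd + CT BT 0 pa 1 pb 1 pc 1 pd) = 1"
proof -
  assume "pb < pc" "pc < pd" "pa < 4" "pb < 4" "pc < 4" "pd < 4"
  hence m: "pa \<in> set [0..<4]" "pb \<in> set [0..<4]" "pc \<in> set [Suc pb..<4]" "pd \<in> set [Suc pc..<4]" by auto
  show ?thesis using pat3_all m unfolding list_all_iff by blast
qed
lemma pat4: "pa < pb \<Longrightarrow> pc < pd \<Longrightarrow> pa < 4 \<Longrightarrow> pb < 4 \<Longrightarrow> pc < 4 \<Longrightarrow> pd < 4 \<Longrightarrow> CT PT 1 pa 1 pb 3 pc 3 pd + (CT BT 1 pa 1 pb 2 pc 2 pd + CT BT 0 pa 0 pb 1 pc 1 pd) = 1"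
proof -
  assume "pa < pb" "pc < pd" "pa < 4" "pb < 4" "pc < 4" "pd < 4"
  hence m: "pa \<in> set [0..<4]" "pb \<in> set [Suc pa..<4]" "pc \<in> set [0..<4]" "pd \<in> set [Suc pc..<4]" by auto
  show ?thesis using pat4_all m unfolding list_all_iff by blast
qed
lemma pat5: "pa < pb \<Longrightarrow> pa < 4 \<Longrightarrow> pb < 4 \<Longrightarrow> pc < 4 \<Longrightarrow> pd < 4 \<Longrightarrow> CT PT 1 pa 1 pb 3 pc 4 pd + CT PT 1 pa 1 pb 2 pc 3 pd + CT PT 0 pa 0 pb 1 pc 3 pd + (CT BT 1 pa 1 pb 2 pc 2 pd + CT BT 0 pa 0 pb 1 pc 2 pd + CT BT 0 pa 0 pb 0 pc 1 pd) = 1"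
proof -
  assume "pa < pb" "pa < 4" "pb < 4" "pc < 4" "pd < 4"
  hence m: "pa \<in> set [0..<4]" "pb \<in> set [Suc pa..<4]" "pc \<in> set [0..<4]" "pd \<in> set [0..<4]" by auto
  show ?thesis using pat5_all m unfolding list_all_iff by blast
qed
lemma pat6: "pb < pc \<Longrightarrow> pa < 4 \<Longrightarrow> pb < 4 \<Longrightarrow> pc < 4 \<Longrightarrow> pd < 4 \<Longrightarrow> CT PT 1 pa 3 pb 3 pc 4 pd + CT PT 1 pa 2 pb 2 pc 3 pd + CT PT 0 pa 1 pb 1 pc 3 pd + (CT BT 1 pa 2 pb 2 pc 2 pd + CT BT 0 pa 1 pb 1 pc 2 pd + CT BT 0 pa 0 pb 0 pc 1 pd) = 1"
proof -
  assume "pb < pc" "pa < 4" "pb < 4" "pc < 4" "pd < 4"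
  hence m: "pa \<in> set [0..<4]" "pb \<in> set [0..<4]" "pc \<in> set [Suc pb..<4]" "pd \<in> set [0..<4]" by auto
  show ?thesis using pat6_all m unfolding list_all_iff by blast
qed
lemma pat7: "pc < pd \<Longrightarrow> pa < 4 \<Longrightarrow> pb < 4 \<Longrightarrow> pc < 4 \<Longrightarrow> pd < 4 \<Longrightarrow> CT PT 1 pa 3 pb 4 pc 4 pd + CT PT 1 pa 2 pb 3 pc 3 pd + CT PT 0 pa 1 pb 3 pc 3 pd + (CT BT 1 pa 2 pb 2 pc 2 pd + CT BT 0 pa 1 pb 2 pc 2 pd + CT BT 0 pa 0 pb 1 pc 1 pd) = 1"
proof -
  assume "pc < pd" "pa < 4" "pb < 4" "pc < 4" "pd < 4"
  hence m: "pa \<in> set [0..<4]" "pb \<in> set [0..<4]" "pc \<in> set [0..<4]" "pd \<in> set [Suc pc..<4]" by auto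
  show ?thesis using pat7_all m unfolding list_all_iff by blast
qed
lemma stuff_cov:
  assumes abcd: "a < b" "b < c" "c < d" and dt: "d div 4 < t"
  shows "covc (stuff t) {a,b,c,d} = (if inj_on (\<lambda>v. v div 4) {a,b,c,d} then 0 else 1)"
proof -
  define A where "A = a div 4"
  define B where "B = b div 4"
  define C where "C = c div 4"
  define D where "D = d div 4"
  define pa where "pa = a mod 4"
  define pb where "pb = b mod 4"
  define pc where "pc = c mod 4"
  define pd where "pd = d mod 4"
  define gP where "gP = (\<lambda>x. covc (pfam x) {a,b,c,d})"
  define gB where "gB = (\<lambda>i. covc (bfam i) {a,b,c,d})"
  have gP_eq: "gP x = CT PT (rel5 A (fst x) (snd x)) pa (rel5 B (fst x) (snd x)) pb
      (rel5 C (fst x) (snd x)) pc (rel5 D (fst x) (snd x)) pd" for x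
    unfolding gP_def covc_pfam A_def B_def C_def D_def pa_def pb_def pc_def pd_def ..
  have gB_eq: "gB i = CT BT (rel3 A i) pa (rel3 B i) pb (rel3 C i) pc (rel3 D i) pd" for i
    unfolding gB_def covc_bfam A_def B_def C_def D_def pa_def pb_def pc_def pd_def ..
  have posl: "pa < 4" "pb < 4" "pc < 4" "pd < 4" unfolding pa_def pb_def pc_def pd_def by simp_all
  have ord: "A \<le> B" "B \<le> C" "C \<le> D" "D < t"
    unfolding A_def B_def C_def D_def using abcd dt by (simp_all add: div_le_mono)
  have sAB: "A = B \<Longrightarrow> pa < pb" unfolding A_def B_def pa_def pb_def using abcd samediv by blast
  have sBC: "B = C \<Longrightarrow> pb < pc" unfolding B_def C_def pb_def pc_def using abcd samediv by blast
  have sCD: "C = D \<Longrightarrow> pc < pd" unfolding C_def D_def pc_def pd_def using abcd samediv by blast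
  have dist: "distinct [a,b,c,d]" using abcd by auto
  have injiff: "inj_on (\<lambda>v. v div 4) {a,b,c,d} \<longleftrightarrow> distinct [A,B,C,D]"
    using inj4[OF dist, of "\<lambda>v. v div 4"] unfolding A_def B_def C_def D_def by simp
  have tot: "covc (stuff t) {a,b,c,d} = sum gP {x. fst x < snd x \<and> snd x < t} + sum gB {0..<t}"
    unfolding covc_stuff gP_def[symmetric] gB_def[symmetric]
    by (simp add: sum_list_distinct_conv_sum_set distinct_prs set_prs)
  have zP: "gP x = 0" if "fst x \<notin> {A,B,C,D} \<or> snd x \<notin> {A,B,C,D}" "fst x < snd x" for x
  proof -
    from that(1) show ?thesis
    proof
      assume h: "fst x \<notin> {A,B,C,D}"
      show ?thesis unfolding gP_eq
        by (rule CT_zero_gen[OF PT_I]) (use h posl in \<open>auto simp: rel5_1 rel5_1' idx20\<close>)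
    next
      assume h: "snd x \<notin> {A,B,C,D}"
      show ?thesis unfolding gP_eq
        by (rule CT_zero_gen[OF PT_J]) (use h posl that(2) in \<open>auto simp: rel5_3 idx20\<close>)
    qed
  qed
  have zB: "gB i = 0" if "i \<notin> {A,B,C,D}" for i
    unfolding gB_eq by (rule CT_zero_gen[OF BT_I]) (use that posl in \<open>auto simp: rel3_1 rel3_1' idx12\<close>)
  have SP: "sum gP {x. fst x < snd x \<and> snd x < t} = sum gP {x. fst x < snd x \<and> fst x \<in> {A,B,C,D} \<and> snd x \<in> {A,B,C,D}}"
  proof (rule sum.mono_neutral_right)
    show "finite {x. fst x < snd x \<and> snd x < t}"
      by (rule finite_subset[of _ "{..<t} \<times> {..<t}"]) auto
    show "{x. fst x < snd x \<and> fst x \<in> {A,B,C,D} \<and> snd x \<in> {A,B,C,D}} \<subseteq> {x. fst x < snd x \<and> snd x < t}"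
      using ord by auto
    show "\<forall>x\<in>{x. fst x < snd x \<and> snd x < t} - {x. fst x < snd x \<and> fst x \<in> {A,B,C,D} \<and> snd x \<in> {A,B,C,D}}. gP x = 0"
    proof
      fix x assume "x \<in> {x. fst x < snd x \<and> snd x < t} - {x. fst x < snd x \<and> fst x \<in> {A,B,C,D} \<and> snd x \<in> {A,B,C,D}}"
      hence "fst x \<notin> {A,B,C,D} \<or> snd x \<notin> {A,B,C,D}" "fst x < snd x" by auto
      thus "gP x = 0" by (rule zP)
    qed
  qed
  have SB: "sum gB {0..<t} = sum gB {A,B,C,D}"
  proof (rule sum.mono_neutral_right)
    show "{A,B,C,D} \<subseteq> {0..<t}" using ord by auto
    show "\<forall>i\<in>{0..<t} - {A,B,C,D}. gB i = 0"
    proof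
      fix i assume "i \<in> {0..<t} - {A,B,C,D}"
      hence "i \<notin> {A,B,C,D}" by blast
      thus "gB i = 0" by (rule zB)
    qed
  qed simp
  define PS where "PS = {x. fst x < snd x \<and> fst x \<in> {A,B,C,D} \<and> snd x \<in> {A,B,C,D}}"
  define BS where "BS = {A,B,C,D}"
  have all: "covc (stuff t) {a,b,c,d} = sum gP PS + sum gB BS"
    using tot SP SB unfolding PS_def BS_def by simp
  consider (c1) "A = B" "B = C" "C = D" | (c2) "A = B" "B = C" "C < D" | (c3) "A < B" "B = C" "C = D" | (c4) "A = B" "B < C" "C = D" | (c5) "A = B" "B < C" "C < D" | (c6) "A < B" "B = C" "C < D" | (c7) "A < B" "B < C" "C = D" | (c8) "A < B" "B < C" "C < D"
  proof -
    have o1: "A = B \<or> A < B" and o2: "B = C \<or> B < C" and o3: "C = D \<or> C < D" using ord by auto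
    show ?thesis using that o1 o2 o3 by blast
  qed
  then show ?thesis
  proof cases
    case c1
    have Q: "PS = {}" unfolding PS_def
      by (rule pairset_eq) (use c1 in auto)
    have Bl: "BS = {A}" unfolding BS_def using c1 by auto
    have e1: "sum gP {} = 0" using c1 by simp
    have e2: "sum gB {A} = gB A" using c1 by simp
    have b0: "gB A = CT BT 1 pa 1 pb 1 pc 1 pd" unfolding gB_eq using c1 by (simp add: rel3_def)
    have ninj: "\<not> inj_on (\<lambda>v. v div 4) {a,b,c,d}" unfolding injiff using c1 by auto
    have pt: "CT BT 1 pa 1 pb 1 pc 1 pd = 1" by (rule pat1) (use c1 sAB sBC sCD posl in auto)
    show ?thesis using all[unfolded Q Bl] e1 e2 b0 ninj pt by simp
  next
    case c2
    have Q: "PS = {(A,D)}" unfolding PS_def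
      by (rule pairset_eq) (use c2 in auto)
    have Bl: "BS = {A,D}" unfolding BS_def using c2 by auto
    have e1: "sum gP {(A,D)} = gP (A,D)" using c2 by simp
    have e2: "sum gB {A,D} = gB A + gB D" using c2 by simp
    have p0: "gP (A,D) = CT PT 1 pa 1 pb 1 pc 3 pd" unfolding gP_eq using c2 by (simp add: rel5_def)
    have b0: "gB A = CT BT 1 pa 1 pb 1 pc 2 pd" unfolding gB_eq using c2 by (simp add: rel3_def)
    have b1: "gB D = CT BT 0 pa 0 pb 0 pc 1 pd" unfolding gB_eq using c2 by (simp add: rel3_def)
    have ninj: "\<not> inj_on (\<lambda>v. v div 4) {a,b,c,d}" unfolding injiff using c2 by auto
    have pt: "CT PT 1 pa 1 pb 1 pc 3 pd + (CT BT 1 pa 1 pb 1 pc 2 pd + CT BT 0 pa 0 pb 0 pc 1 pd) = 1" by (rule pat2) (use c2 sAB sBC posl in auto)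
    show ?thesis using all[unfolded Q Bl] e1 e2 p0 b0 b1 ninj pt by simp
  next
    case c3
    have Q: "PS = {(A,B)}" unfolding PS_def
      by (rule pairset_eq) (use c3 in auto)
    have Bl: "BS = {A,B}" unfolding BS_def using c3 by auto
    have e1: "sum gP {(A,B)} = gP (A,B)" using c3 by simp
    have e2: "sum gB {A,B} = gB A + gB B" using c3 by simp
    have p0: "gP (A,B) = CT PT 1 pa 3 pb 3 pc 3 pd" unfolding gP_eq using c3 by (simp add: rel5_def)
    have b0: "gB A = CT BT 1 pa 2 pb 2 pc 2 pd" unfolding gB_eq using c3 by (simp add: rel3_def)
    have b1: "gB B = CT BT 0 pa 1 pb 1 pc 1 pd" unfolding gB_eq using c3 by (simp add: rel3_def)
    have ninj: "\<not> inj_on (\<lambda>v. v div 4) {a,b,c,d}" unfolding injiff using c3 by auto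
    have pt: "CT PT 1 pa 3 pb 3 pc 3 pd + (CT BT 1 pa 2 pb 2 pc 2 pd + CT BT 0 pa 1 pb 1 pc 1 pd) = 1" by (rule pat3) (use c3 sBC sCD posl in auto)
    show ?thesis using all[unfolded Q Bl] e1 e2 p0 b0 b1 ninj pt by simp
  next
    case c4
    have Q: "PS = {(A,C)}" unfolding PS_def
      by (rule pairset_eq) (use c4 in auto)
    have Bl: "BS = {A,C}" unfolding BS_def using c4 by auto
    have e1: "sum gP {(A,C)} = gP (A,C)" using c4 by simp
    have e2: "sum gB {A,C} = gB A + gB C" using c4 by simp
    have p0: "gP (A,C) = CT PT 1 pa 1 pb 3 pc 3 pd" unfolding gP_eq using c4 by (simp add: rel5_def)
    have b0: "gB A = CT BT 1 pa 1 pb 2 pc 2 pd" unfolding gB_eq using c4 by (simp add: rel3_def)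
    have b1: "gB C = CT BT 0 pa 0 pb 1 pc 1 pd" unfolding gB_eq using c4 by (simp add: rel3_def)
    have ninj: "\<not> inj_on (\<lambda>v. v div 4) {a,b,c,d}" unfolding injiff using c4 by auto
    have pt: "CT PT 1 pa 1 pb 3 pc 3 pd + (CT BT 1 pa 1 pb 2 pc 2 pd + CT BT 0 pa 0 pb 1 pc 1 pd) = 1" by (rule pat4) (use c4 sAB sCD posl in auto)
    show ?thesis using all[unfolded Q Bl] e1 e2 p0 b0 b1 ninj pt by simp
  next
    case c5
    have Q: "PS = {(A,C),(A,D),(C,D)}" unfolding PS_def
      by (rule pairset_eq) (use c5 in auto)
    have Bl: "BS = {A,C,D}" unfolding BS_def using c5 by auto
    have e1: "sum gP {(A,C),(A,D),(C,D)} = gP (A,C) + gP (A,D) + gP (C,D)" using c5 by simp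
    have e2: "sum gB {A,C,D} = gB A + gB C + gB D" using c5 by simp
    have p0: "gP (A,C) = CT PT 1 pa 1 pb 3 pc 4 pd" unfolding gP_eq using c5 by (simp add: rel5_def)
    have p1: "gP (A,D) = CT PT 1 pa 1 pb 2 pc 3 pd" unfolding gP_eq using c5 by (simp add: rel5_def)
    have p2: "gP (C,D) = CT PT 0 pa 0 pb 1 pc 3 pd" unfolding gP_eq using c5 by (simp add: rel5_def)
    have b0: "gB A = CT BT 1 pa 1 pb 2 pc 2 pd" unfolding gB_eq using c5 by (simp add: rel3_def)
    have b1: "gB C = CT BT 0 pa 0 pb 1 pc 2 pd" unfolding gB_eq using c5 by (simp add: rel3_def)
    have b2: "gB D = CT BT 0 pa 0 pb 0 pc 1 pd" unfolding gB_eq using c5 by (simp add: rel3_def)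
    have ninj: "\<not> inj_on (\<lambda>v. v div 4) {a,b,c,d}" unfolding injiff using c5 by auto
    have pt: "CT PT 1 pa 1 pb 3 pc 4 pd + CT PT 1 pa 1 pb 2 pc 3 pd + CT PT 0 pa 0 pb 1 pc 3 pd + (CT BT 1 pa 1 pb 2 pc 2 pd + CT BT 0 pa 0 pb 1 pc 2 pd + CT BT 0 pa 0 pb 0 pc 1 pd) = 1" by (rule pat5) (use c5 sAB posl in auto)
    show ?thesis using all[unfolded Q Bl] e1 e2 p0 p1 p2 b0 b1 b2 ninj pt by simp
  next
    case c6
    have Q: "PS = {(A,B),(A,D),(B,D)}" unfolding PS_def
      by (rule pairset_eq) (use c6 in auto)
    have Bl: "BS = {A,B,D}" unfolding BS_def using c6 by auto
    have e1: "sum gP {(A,B),(A,D),(B,D)} = gP (A,B) + gP (A,D) + gP (B,D)" using c6 by simp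
    have e2: "sum gB {A,B,D} = gB A + gB B + gB D" using c6 by simp
    have p0: "gP (A,B) = CT PT 1 pa 3 pb 3 pc 4 pd" unfolding gP_eq using c6 by (simp add: rel5_def)
    have p1: "gP (A,D) = CT PT 1 pa 2 pb 2 pc 3 pd" unfolding gP_eq using c6 by (simp add: rel5_def)
    have p2: "gP (B,D) = CT PT 0 pa 1 pb 1 pc 3 pd" unfolding gP_eq using c6 by (simp add: rel5_def)
    have b0: "gB A = CT BT 1 pa 2 pb 2 pc 2 pd" unfolding gB_eq using c6 by (simp add: rel3_def)
    have b1: "gB B = CT BT 0 pa 1 pb 1 pc 2 pd" unfolding gB_eq using c6 by (simp add: rel3_def)
    have b2: "gB D = CT BT 0 pa 0 pb 0 pc 1 pd" unfolding gB_eq using c6 by (simp add: rel3_def)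
    have ninj: "\<not> inj_on (\<lambda>v. v div 4) {a,b,c,d}" unfolding injiff using c6 by auto
    have pt: "CT PT 1 pa 3 pb 3 pc 4 pd + CT PT 1 pa 2 pb 2 pc 3 pd + CT PT 0 pa 1 pb 1 pc 3 pd + (CT BT 1 pa 2 pb 2 pc 2 pd + CT BT 0 pa 1 pb 1 pc 2 pd + CT BT 0 pa 0 pb 0 pc 1 pd) = 1" by (rule pat6) (use c6 sBC posl in auto)
    show ?thesis using all[unfolded Q Bl] e1 e2 p0 p1 p2 b0 b1 b2 ninj pt by simp
  next
    case c7
    have Q: "PS = {(A,B),(A,C),(B,C)}" unfolding PS_def
      by (rule pairset_eq) (use c7 in auto)
    have Bl: "BS = {A,B,C}" unfolding BS_def using c7 by auto
    have e1: "sum gP {(A,B),(A,C),(B,C)} = gP (A,B) + gP (A,C) + gP (B,C)" using c7 by simp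
    have e2: "sum gB {A,B,C} = gB A + gB B + gB C" using c7 by simp
    have p0: "gP (A,B) = CT PT 1 pa 3 pb 4 pc 4 pd" unfolding gP_eq using c7 by (simp add: rel5_def)
    have p1: "gP (A,C) = CT PT 1 pa 2 pb 3 pc 3 pd" unfolding gP_eq using c7 by (simp add: rel5_def)
    have p2: "gP (B,C) = CT PT 0 pa 1 pb 3 pc 3 pd" unfolding gP_eq using c7 by (simp add: rel5_def)
    have b0: "gB A = CT BT 1 pa 2 pb 2 pc 2 pd" unfolding gB_eq using c7 by (simp add: rel3_def)
    have b1: "gB B = CT BT 0 pa 1 pb 2 pc 2 pd" unfolding gB_eq using c7 by (simp add: rel3_def)
    have b2: "gB C = CT BT 0 pa 0 pb 1 pc 1 pd" unfolding gB_eq using c7 by (simp add: rel3_def)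
    have ninj: "\<not> inj_on (\<lambda>v. v div 4) {a,b,c,d}" unfolding injiff using c7 by auto
    have pt: "CT PT 1 pa 3 pb 4 pc 4 pd + CT PT 1 pa 2 pb 3 pc 3 pd + CT PT 0 pa 1 pb 3 pc 3 pd + (CT BT 1 pa 2 pb 2 pc 2 pd + CT BT 0 pa 1 pb 2 pc 2 pd + CT BT 0 pa 0 pb 1 pc 1 pd) = 1" by (rule pat7) (use c7 sCD posl in auto)
    show ?thesis using all[unfolded Q Bl] e1 e2 p0 p1 p2 b0 b1 b2 ninj pt by simp
  next
    case c8
    have Q: "PS = {(A,B),(A,C),(A,D),(B,C),(B,D),(C,D)}" unfolding PS_def
      by (rule pairset_eq) (use c8 in auto)
    have Bl: "BS = {A,B,C,D}" unfolding BS_def using c8 by auto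
    have e1: "sum gP {(A,B),(A,C),(A,D),(B,C),(B,D),(C,D)} = gP (A,B) + gP (A,C) + gP (A,D) + gP (B,C) + gP (B,D) + gP (C,D)" using c8 by simp
    have e2: "sum gB {A,B,C,D} = gB A + gB B + gB C + gB D" using c8 by simp
    have p0: "gP (A,B) = 0" unfolding gP_eq using c8 posl by (simp add: rel5_def CT_zero_lift[OF PT_L])
    have p1: "gP (A,C) = 0" unfolding gP_eq using c8 posl by (simp add: rel5_def CT_zero_lift[OF PT_L])
    have p2: "gP (A,D) = 0" unfolding gP_eq using c8 posl by (simp add: rel5_def CT_zero_lift[OF PT_L])
    have p3: "gP (B,C) = 0" unfolding gP_eq using c8 posl by (simp add: rel5_def CT_zero_lift[OF PT_L])
    have p4: "gP (B,D) = 0" unfolding gP_eq using c8 posl by (simp add: rel5_def CT_zero_lift[OF PT_L])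
    have p5: "gP (C,D) = 0" unfolding gP_eq using c8 posl by (simp add: rel5_def CT_zero_lift[OF PT_L])
    have b0: "gB A = 0" unfolding gB_eq using c8 posl by (simp add: rel3_def CT_zero_lift[OF BT_L])
    have b1: "gB B = 0" unfolding gB_eq using c8 posl by (simp add: rel3_def CT_zero_lift[OF BT_L])
    have b2: "gB C = 0" unfolding gB_eq using c8 posl by (simp add: rel3_def CT_zero_lift[OF BT_L])
    have b3: "gB D = 0" unfolding gB_eq using c8 posl by (simp add: rel3_def CT_zero_lift[OF BT_L])
    have inj: "inj_on (\<lambda>v. v div 4) {a,b,c,d}" unfolding injiff using c8 by auto
    show ?thesis using all[unfolded Q Bl] e1 e2 p0 p1 p2 p3 p4 p5 b0 b1 b2 b3 inj by simp
  qed
qed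

definition liftl :: "(nat \<Rightarrow> nat) \<Rightarrow> nat \<Rightarrow> nat" where "liftl \<rho> = (\<lambda>v. \<rho> (v div 4))"

lemma covc_lift: "covc (map liftl L) e = covc L ((\<lambda>v. v div 4) ` e)"
  unfolding covc_def liftl_def by (simp add: filter_map comp_def image_image)

lemma covc_small: assumes "finite e" "card e < 4" shows "covc L e = 0"
proof -
  have "\<forall>\<rho>\<in>set L. \<rho> ` e \<noteq> {0,1,2,3}"
  proof
    fix \<rho> assume "\<rho> \<in> set L"
    show "\<rho> ` e \<noteq> {0,1,2,3}"
    proof
      assume "\<rho> ` e = {0,1,2,3}"
      hence "card (\<rho> ` e) = 4" by simp
      moreover have "card (\<rho> ` e) \<le> card e" by (rule card_image_le[OF assms(1)])
      ultimately show False using assms(2) by simp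
    qed
  qed
  thus ?thesis unfolding covc_def by (simp add: filter_empty_conv)
qed

lemma card4_obtain:
  fixes e :: "nat set" assumes "finite e" "card e = 4"
  obtains a b c d where "a<b" "b<c" "c<d" "e = {a,b,c,d}"
proof -
  define xs where "xs = sorted_list_of_set e"
  have l: "length xs = 4" using assms by (simp add: xs_def)
  have s: "sorted_wrt (<) xs" by (simp add: xs_def)
  have st: "set xs = e" using assms by (simp add: xs_def)
  have "\<exists>a b c d. xs = [a,b,c,d]" using l by (auto simp: numeral_eq_Suc length_Suc_conv)
  then obtain a b c d where xs: "xs = [a,b,c,d]" by blast
  show ?thesis using that s st unfolding xs by auto
qed

function Lst :: "nat \<Rightarrow> (nat \<Rightarrow> nat) list" where
  "Lst n = (if n \<le> 3 then [] else stuff ((n+3) div 4) @ map liftl (Lst ((n+3) div 4)))"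
  by auto
termination
proof (relation "measure id")
  show "wf (measure id)" by simp
  fix n :: nat assume "\<not> n \<le> 3"
  hence "(n+3) div 4 < n" by presburger
  thus "((n+3) div 4, n) \<in> measure id" by simp
qed

declare Lst.simps[simp del]

lemma Lst_cov: "e \<in> complete_hyp_edges n 4 \<Longrightarrow> covc (Lst n) e = 1"
proof (induction n arbitrary: e rule: less_induct)
  case (less n)
  from less.prems have sub: "e \<subseteq> {..<n}" and c4: "card e = 4" unfolding complete_hyp_edges_def by auto
  have fin: "finite e" using sub finite_subset by blast
  have "card e \<le> card {..<n}" using sub by (intro card_mono) auto
  hence n4: "4 \<le> n" using c4 by simp
  define t where "t = (n+3) div 4"
  have Ln: "Lst n = stuff t @ map liftl (Lst t)" using n4 by (subst Lst.simps) (simp add: t_def)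
  have tn: "t < n" unfolding t_def using n4 by presburger
  obtain a b c d where abcd: "a<b" "b<c" "c<d" "e = {a,b,c,d}" using card4_obtain[OF fin c4] by blast
  have "d < n" using sub abcd by auto
  hence dt: "d div 4 < t" unfolding t_def by presburger
  have cs: "covc (stuff t) e = (if inj_on (\<lambda>v. v div 4) e then 0 else 1)"
    using stuff_cov[OF abcd(1-3) dt] abcd(4) by simp
  have cl: "covc (map liftl (Lst t)) e = covc (Lst t) ((\<lambda>v. v div 4) ` e)" by (rule covc_lift)
  show ?case
  proof (cases "inj_on (\<lambda>v. v div 4) e")
    case True
    hence "card ((\<lambda>v. v div 4) ` e) = 4" using card_image c4 by metis
    moreover have "(\<lambda>v. v div 4) ` e \<subseteq> {..<t}"
    proof
      fix u assume "u \<in> (\<lambda>v. v div 4) ` e"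
      then obtain v where v: "v \<in> e" "u = v div 4" by blast
      have "v < n" using v sub by auto
      hence "v div 4 < (n+3) div 4" by presburger
      thus "u \<in> {..<t}" unfolding v(2) t_def by simp
    qed
    ultimately have "(\<lambda>v. v div 4) ` e \<in> complete_hyp_edges t 4" unfolding complete_hyp_edges_def by auto
    hence "covc (Lst t) ((\<lambda>v. v div 4) ` e) = 1" using less.IH[OF tn] by blast
    thus ?thesis using Ln cs cl True by simp
  next
    case False
    have "card ((\<lambda>v. v div 4) ` e) \<le> card e" by (rule card_image_le[OF fin])
    moreover have "card ((\<lambda>v. v div 4) ` e) \<noteq> card e" using False eq_card_imp_inj_on[OF fin] by blast
    ultimately have "card ((\<lambda>v. v div 4) ` e) < 4" using c4 by simp
    hence "covc (Lst t) ((\<lambda>v. v div 4) ` e) = 0" using fin by (intro covc_small) auto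
    thus ?thesis using Ln cs cl False by simp
  qed
qed

lemma Lst_len: "30 * length (Lst n) \<le> 13 * (n * n) + 300 * n"
proof (induction n rule: less_induct)
  case (less n)
  show ?case
  proof (cases "n \<le> 3")
    case True thus ?thesis by (subst Lst.simps) simp
  next
    case False
    define t where "t = (n+3) div 4"
    have tn: "t < n" unfolding t_def using False by presburger
    have Ln: "length (Lst n) = length (stuff t) + length (Lst t)"
      using False by (subst Lst.simps) (simp add: t_def)
    have IH: "30 * length (Lst t) \<le> 13 * (t * t) + 300 * t" using less.IH[OF tn] .
    have lp: "2 * length (prs t) + t = t * t" by (rule length_prs)
    have ls: "length (stuff t) = 13 * length (prs t) + 9 * t" by (rule length_stuff)
    have t4: "4 * t \<le> n + 3" using div_times_less_eq_dividend[of "n+3" 4] unfolding t_def by (simp add: mult.commute)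
    have "(4 * t) * (4 * t) \<le> (n + 3) * (n + 3)" using mult_le_mono[OF t4 t4] .
    hence sq: "16 * (t * t) \<le> n * n + 6 * n + 9" by (simp add: algebra_simps)
    show ?thesis using Ln IH lp ls t4 sq False by linarith
  qed
qed

lemma choose2: "2 * (n choose 2) = n * (n - 1)"
proof -
  have "even (n * (n - 1))" by auto
  thus ?thesis by (simp add: choose_two)
qed

theorem mainTheorem1:
  shows "\<forall>\<epsilon>::real>0. \<forall>\<^sub>F n in sequentially.
           real (f 4 n) \<le> (14 / 15) * (1 + \<epsilon>) * real (n choose 2)"
proof (intro allI impI)
  fix \<epsilon> :: real assume ep: "\<epsilon> > 0"
  show "\<forall>\<^sub>F n in sequentially. real (f 4 n) \<le> (14 / 15) * (1 + \<epsilon>) * real (n choose 2)"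
  proof (rule eventually_sequentiallyI[of 314])
    fix n :: nat assume n: "314 \<le> n"
    have f1: "f 4 n \<le> length (Lst n)" by (rule f_le) (use Lst_cov in blast)
    have f2: "30 * length (Lst n) \<le> 13 * (n * n) + 300 * n" by (rule Lst_len)
    have ch: "2 * (n choose 2) = n * (n - 1)" by (rule choose2)
    have nn: "314 * n \<le> n * n" using mult_le_mono1[OF n, of n] .
    have nm: "n * (n - 1) + n = n * n" using n by (cases n) simp_all
    have "30 * f 4 n \<le> 28 * (n choose 2)" using f1 f2 ch nn nm by linarith
    hence "real (30 * f 4 n) \<le> real (28 * (n choose 2))" by (simp only: of_nat_le_iff)
    hence r: "real (f 4 n) \<le> (14 / 15) * real (n choose 2)" by simp
    have "(14 / 15) * real (n choose 2) \<le> (14 / 15) * (1 + \<epsilon>) * real (n choose 2)"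
      using ep by (simp add: mult_right_mono)
    thus "real (f 4 n) \<le> (14 / 15) * (1 + \<epsilon>) * real (n choose 2)" using r by linarith
  qed
qed

end
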